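(* Let $f:\mathbb{R}^n\to\mathbb{R}$ be differentiable and $L>0$. Then $f$ satisfies $$\|\nabla f(u_1)-\nabla f(u_2)\|\le L\|u_1-u_2\|\quad\text{for all }(u_1,u_2)\in\mathbb{R}^n\times\mathbb{R}^n$$ if and only if, for all $(u_1,u_2)\in\mathbb{R}^n\times\mathbb{R}^n$, $$f(u_1)\le f(u_2)+\Big\langle \tfrac{\nabla f(u_1)+\nabla f(u_2)}{2},\,u_1-u_2\Big\rangle+\tfrac{L}{4}\|u_1-u_2\|^2-\tfrac{1}{4L}\|\nabla f(u_1)-\nabla f(u_2)\|^2 .$$
   Context: $\|\cdot\|$ is the Euclidean norm and $\langle\cdot,\cdot\rangle$ the standard inner product on $\mathbb{R}^n$. *)

theory Defs
  imports "HOL-Analysis.Analysis"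
begin

definition grad :: "('a::euclidean_space \<Rightarrow> real) \<Rightarrow> 'a \<Rightarrow> 'a" where
  "grad f x = (\<Sum>b\<in>Basis. frechet_derivative f (at x) b *\<^sub>R b)"

end

theory Submission
  imports Defs
begin

lemma grad_deriv:
  fixes f :: "'a::euclidean_space \<Rightarrow> real"
  assumes "f differentiable (at x)"
  shows "(f has_derivative (\<lambda>h. grad f x \<bullet> h)) (at x)"
proof -
  let ?D = "frechet_derivative f (at x)"
  have d: "(f has_derivative ?D) (at x)" using assms frechet_derivative_works by blast
  have lin: "linear ?D" using d has_derivative_linear by blast
  have "?D h = grad f x \<bullet> h" for h
  proof -
    have "?D h = ?D (\<Sum>b\<in>Basis. (h \<bullet> b) *\<^sub>R b)" by (simp add: euclidean_representation)
    also have "\<dots> = (\<Sum>b\<in>Basis. (h \<bullet> b) * ?D b)"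
      using lin by (simp add: linear_sum linear_scale)
    also have "\<dots> = grad f x \<bullet> h"
      unfolding grad_def inner_sum_left by (simp add: mult.commute inner_commute)
    finally show ?thesis .
  qed
  then have "?D = (\<lambda>h. grad f x \<bullet> h)" by auto
  with d show ?thesis by simp
qed

lemma upper_quad:
  fixes f :: "'a::real_inner \<Rightarrow> real"
  assumes D: "\<And>x. (f has_derivative (\<lambda>h. g x \<bullet> h)) (at x)"
    and Lip: "\<And>x y. norm (g x - g y) \<le> L * norm (x - y)"
  shows "f (y + v) \<le> f y + g y \<bullet> v + L / 2 * (norm v)\<^sup>2"
proof -
  define \<phi> where "\<phi> t = f (y + t *\<^sub>R v) - t * (g y \<bullet> v) - L / 2 * t\<^sup>2 * (norm v)\<^sup>2" for t
  have key: "\<exists>D. (\<phi> has_real_derivative D) (at t) \<and> D \<le> 0" if t: "0 \<le> t" "t \<le> 1" for t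
  proof -
    have l: "((\<lambda>t. y + t *\<^sub>R v) has_derivative (\<lambda>s. s *\<^sub>R v)) (at t)"
      by (auto intro!: derivative_eq_intros)
    have c: "((\<lambda>t. f (y + t *\<^sub>R v)) has_derivative (\<lambda>s. g (y + t *\<^sub>R v) \<bullet> (s *\<^sub>R v))) (at t)"
      using diff_chain_at[OF l D] by (simp add: o_def)
    have "((\<lambda>t. f (y + t *\<^sub>R v)) has_real_derivative (g (y + t *\<^sub>R v) \<bullet> v)) (at t)"
    proof -
      have "(\<lambda>s. g (y + t *\<^sub>R v) \<bullet> (s *\<^sub>R v)) = (*) (g (y + t *\<^sub>R v) \<bullet> v)"
        by (rule ext) simp
      then show ?thesis unfolding has_field_derivative_def using c by simp
    qed
    then have "(\<phi> has_real_derivative (g (y + t *\<^sub>R v) \<bullet> v - g y \<bullet> v - L * t * (norm v)\<^sup>2)) (at t)"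
      unfolding \<phi>_def by (auto intro!: derivative_eq_intros)
    moreover have "g (y + t *\<^sub>R v) \<bullet> v - g y \<bullet> v - L * t * (norm v)\<^sup>2 \<le> 0"
    proof -
      have "g (y + t *\<^sub>R v) \<bullet> v - g y \<bullet> v = (g (y + t *\<^sub>R v) - g y) \<bullet> v" by (simp add: inner_diff_left)
      also have "\<dots> \<le> norm (g (y + t *\<^sub>R v) - g y) * norm v" by (rule norm_cauchy_schwarz)
      also have "\<dots> \<le> L * norm (t *\<^sub>R v) * norm v"
        using Lip[of "y + t *\<^sub>R v" y] by (simp add: mult_right_mono)
      also have "\<dots> = L * t * (norm v)\<^sup>2" using t by (simp add: power2_eq_square)
      finally show ?thesis by simp
    qed
    ultimately show ?thesis by blast
  qed
  have "\<phi> 0 \<ge> \<phi> 1"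
    by (rule DERIV_nonpos_imp_nonincreasing) (use key in auto)
  then show ?thesis unfolding \<phi>_def by simp
qed

lemma lower_quad:
  fixes f :: "'a::real_inner \<Rightarrow> real"
  assumes D: "\<And>x. (f has_derivative (\<lambda>h. g x \<bullet> h)) (at x)"
    and Lip: "\<And>x y. norm (g x - g y) \<le> L * norm (x - y)"
  shows "f (y + v) \<ge> f y + g y \<bullet> v - L / 2 * (norm v)\<^sup>2"
proof -
  have D': "((\<lambda>x. - f x) has_derivative (\<lambda>h. (- g x) \<bullet> h)) (at x)" for x
    using has_derivative_minus[OF D[of x]] by simp
  have Lip': "norm ((- g x) - (- g y)) \<le> L * norm (x - y)" for x y
    using Lip[of x y] by (simp add: norm_minus_commute)
  show ?thesis using upper_quad[OF D' Lip', of y v] by simp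
qed

theorem proposition2p1:
  fixes f :: "real ^ 'n \<Rightarrow> real" and L :: real
  assumes "\<And>x. f differentiable (at x)"
    and "L > 0"
  shows "(\<forall>u1 u2. norm (grad f u1 - grad f u2) \<le> L * norm (u1 - u2)) \<longleftrightarrow>
         (\<forall>u1 u2. f u1 \<le> f u2 + ((grad f u1 + grad f u2) /\<^sub>R 2) \<bullet> (u1 - u2)
                     + L / 4 * (norm (u1 - u2))\<^sup>2
                     - 1 / (4 * L) * (norm (grad f u1 - grad f u2))\<^sup>2)"
proof
  assume H: "\<forall>u1 u2. norm (grad f u1 - grad f u2) \<le> L * norm (u1 - u2)"
  let ?g = "grad f"
  have D: "\<And>x. (f has_derivative (\<lambda>h. ?g x \<bullet> h)) (at x)" using grad_deriv assms(1) by blast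
  have Lip: "\<And>x y. norm (?g x - ?g y) \<le> L * norm (x - y)" using H by blast
  show "\<forall>u1 u2. f u1 \<le> f u2 + ((?g u1 + ?g u2) /\<^sub>R 2) \<bullet> (u1 - u2)
                     + L / 4 * (norm (u1 - u2))\<^sup>2
                     - 1 / (4 * L) * (norm (?g u1 - ?g u2))\<^sup>2"
  proof (intro allI)
    fix x y :: "real ^ 'n"
    define d where "d = x - y"
    define e where "e = (1 / (2 * L)) *\<^sub>R (?g x - ?g y)"
    define w where "w = x - d /\<^sub>R 2 - e"
    have wx: "w = x + (- d /\<^sub>R 2 - e)" unfolding w_def by (simp add: algebra_simps)
    have wy: "w = y + (d /\<^sub>R 2 - e)" unfolding w_def d_def by (auto simp: vec_eq_iff field_simps)
    have A: "f w \<le> f x + ?g x \<bullet> (- d /\<^sub>R 2 - e) + L / 2 * (norm (- d /\<^sub>R 2 - e))\<^sup>2"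
      using upper_quad[OF D Lip, of x "- d /\<^sub>R 2 - e"] wx by simp
    have B: "f w \<ge> f y + ?g y \<bullet> (d /\<^sub>R 2 - e) - L / 2 * (norm (d /\<^sub>R 2 - e))\<^sup>2"
      using lower_quad[OF D Lip, of y "d /\<^sub>R 2 - e"] wy by simp
    have n1: "(norm (- d /\<^sub>R 2 - e))\<^sup>2 = (norm d)\<^sup>2 / 4 + d \<bullet> e + (norm e)\<^sup>2"
      by (simp add: power2_norm_eq_inner inner_simps inner_commute field_simps)
    have n2: "(norm (d /\<^sub>R 2 - e))\<^sup>2 = (norm d)\<^sup>2 / 4 - d \<bullet> e + (norm e)\<^sup>2"
      by (simp add: power2_norm_eq_inner inner_simps inner_commute field_simps)
    have ne: "(norm e)\<^sup>2 = (norm (?g x - ?g y))\<^sup>2 / (4 * L\<^sup>2)"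
    proof -
      have "norm e = norm (?g x - ?g y) / (2 * L)" unfolding e_def using assms(2) by simp
      then have "(norm e)\<^sup>2 = (norm (?g x - ?g y))\<^sup>2 / (2 * L)\<^sup>2" by (simp add: power_divide)
      moreover have "(2 * L)\<^sup>2 = 4 * L\<^sup>2" by algebra
      ultimately show ?thesis by simp
    qed
    have ge: "(?g x - ?g y) \<bullet> e = (norm (?g x - ?g y))\<^sup>2 / (2 * L)"
      unfolding e_def by (simp add: power2_norm_eq_inner)
    have "f y - f x \<le> ?g x \<bullet> (- d /\<^sub>R 2 - e) - ?g y \<bullet> (d /\<^sub>R 2 - e)
          + L / 2 * ((norm (- d /\<^sub>R 2 - e))\<^sup>2 + (norm (d /\<^sub>R 2 - e))\<^sup>2)"
      using A B by (simp add: algebra_simps)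
    also have "?g x \<bullet> (- d /\<^sub>R 2 - e) - ?g y \<bullet> (d /\<^sub>R 2 - e)
       = ((?g y + ?g x) /\<^sub>R 2) \<bullet> (y - x) - (?g x - ?g y) \<bullet> e"
      unfolding d_def by (simp add: inner_simps field_simps)
    also have "L / 2 * ((norm (- d /\<^sub>R 2 - e))\<^sup>2 + (norm (d /\<^sub>R 2 - e))\<^sup>2)
       = L / 4 * (norm d)\<^sup>2 + L * (norm e)\<^sup>2"
      unfolding n1 n2 by (simp add: algebra_simps)
    finally have F: "f y - f x \<le> ((?g y + ?g x) /\<^sub>R 2) \<bullet> (y - x)
        - (norm (?g x - ?g y))\<^sup>2 / (2 * L) + L / 4 * (norm d)\<^sup>2
        + L * ((norm (?g x - ?g y))\<^sup>2 / (4 * L\<^sup>2))"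
      unfolding ge ne by simp
    have E3: "L * ((norm (?g x - ?g y))\<^sup>2 / (4 * L\<^sup>2)) = (norm (?g x - ?g y))\<^sup>2 / (4 * L)"
      using assms(2) by (simp add: power2_eq_square field_simps)
    have E4: "(norm (?g x - ?g y))\<^sup>2 / (2 * L) = 2 * ((norm (?g x - ?g y))\<^sup>2 / (4 * L))"
      using assms(2) by (simp add: field_simps)
    have E5: "1 / (4 * L) * (norm (?g x - ?g y))\<^sup>2 = (norm (?g x - ?g y))\<^sup>2 / (4 * L)"
      by simp
    have r1: "norm (y - x) = norm d" unfolding d_def by (rule norm_minus_commute)
    have r2: "norm (?g y - ?g x) = norm (?g x - ?g y)" by (rule norm_minus_commute)
    show "f y \<le> f x + ((?g y + ?g x) /\<^sub>R 2) \<bullet> (y - x)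
                     + L / 4 * (norm (y - x))\<^sup>2
                     - 1 / (4 * L) * (norm (?g y - ?g x))\<^sup>2"
      unfolding r1 r2 E5 using F E3 E4 by linarith
  qed
next
  assume H: "\<forall>u1 u2. f u1 \<le> f u2 + ((grad f u1 + grad f u2) /\<^sub>R 2) \<bullet> (u1 - u2)
                     + L / 4 * (norm (u1 - u2))\<^sup>2
                     - 1 / (4 * L) * (norm (grad f u1 - grad f u2))\<^sup>2"
  show "\<forall>u1 u2. norm (grad f u1 - grad f u2) \<le> L * norm (u1 - u2)"
  proof (intro allI)
    fix x y :: "real ^ 'n"
    let ?a = "norm (grad f x - grad f y)" and ?b = "norm (x - y)"
    have h1: "f x \<le> f y + ((grad f x + grad f y) /\<^sub>R 2) \<bullet> (x - y) + L / 4 * ?b\<^sup>2 - 1 / (4 * L) * ?a\<^sup>2"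
      using H by blast
    have h2: "f y \<le> f x + ((grad f y + grad f x) /\<^sub>R 2) \<bullet> (y - x) + L / 4 * (norm (y - x))\<^sup>2
       - 1 / (4 * L) * (norm (grad f y - grad f x))\<^sup>2"
      using H by blast
    have e1: "((grad f y + grad f x) /\<^sub>R 2) \<bullet> (y - x) = - (((grad f x + grad f y) /\<^sub>R 2) \<bullet> (x - y))"
      by (simp add: algebra_simps inner_diff_right)
    have e2: "norm (y - x) = ?b" "norm (grad f y - grad f x) = ?a"
      by (rule norm_minus_commute)+
    have c: "0 \<le> L / 2 * ?b\<^sup>2 - 2 * (1 / (4 * L) * ?a\<^sup>2)"
      using h1 h2 unfolding e1 e2 by linarith
    have "0 \<le> (2 * L) * (L / 2 * ?b\<^sup>2 - 2 * (1 / (4 * L) * ?a\<^sup>2))"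
      using c assms(2) by simp
    also have "\<dots> = L\<^sup>2 * ?b\<^sup>2 - ?a\<^sup>2"
      using assms(2) by (simp add: field_simps power2_eq_square)
    finally have "?a\<^sup>2 \<le> L\<^sup>2 * ?b\<^sup>2" by simp
    then have "?a\<^sup>2 \<le> (L * ?b)\<^sup>2" by (simp add: power_mult_distrib)
    then show "?a \<le> L * ?b"
    proof -
      have "0 \<le> L * ?b" using assms(2) by simp
      then show ?thesis using \<open>?a\<^sup>2 \<le> (L * ?b)\<^sup>2\<close> power2_le_imp_le by blast
    qed
  qed
qed

end
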